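(* Let $X,Y$ be finite sets. (1) For filtrations $F_X,F_Y$ over $X,Y$, $d_{\mathrm{B}}(\mathbf{mgm}(F_X),\mathbf{mgm}(F_Y))\leq d_{\mathrm{T}}(F_X,F_Y)$. (2) For phylogenetic networks $N_X,N_Y$ over $X,Y$ with Vietoris–Rips filtrations $\mathbf{VR}_X,\mathbf{VR}_Y$, $d_{\mathrm{B}}(\mathbf{mgm}(\mathbf{VR}_X),\mathbf{mgm}(\mathbf{VR}_Y))\leq d_{\mathrm{GH}}((X,N_X),(Y,N_Y))$.
   Context: Filtration over $X$: order-preserving $F_X$ from nonempty subsets of $X$ (under inclusion) to $\mathbb{R}$. Mergegram $\mathbf{mgm}(F_X)$: multiset of the nonempty intervals $I_\sigma=[F_X(\sigma),\min_{\sigma\subsetneq\tau\subset X}F_X(\tau))$ ($\min\emptyset=\infty$), one per nonempty $\sigma\subset X$. Bottleneck distance $d_{\mathrm{B}}$ between multisets of intervals $[a,b)$ ($b\in\mathbb{R}\cup\{\infty\}$): infimum of $\varepsilon$ admitting a partial bijection with matched endpoints differing by at most $\varepsilon$ in each coordinate ($|\infty-\infty|=0$) and unmatched intervals of length at most $2\varepsilon$. Pullback along a surjection $\varphi:Z\twoheadrightarrow X$: $\varphi^*F_X(\kappa)=F_X(\varphi(\kappa))$. Tripod distance: $d_{\mathrm{T}}(F_X,F_Y):=\inf\max_{\emptyset\neq\kappa\subset Z}|\varphi_X^*F_X(\kappa)-\varphi_Y^*F_Y(\kappa)|$ over finite sets $Z$ and surjections $\varphi_X:Z\twoheadrightarrow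 X$, $\varphi_Y:Z\twoheadrightarrow Y$. A phylogenetic network over $X$ is $N_X:X\times X\to\mathbb{R}$, symmetric, with $\max\{N_X(x,x),N_X(x',x')\}\leq N_X(x,x')$; $\mathbf{VR}_X(\sigma):=\max_{x,x'\in\sigma}N_X(x,x')$. $d_{\mathrm{GH}}((X,N_X),(Y,N_Y)):=\inf\max_{z,z'\in Z}|N_X(\varphi_X(z),\varphi_X(z'))-N_Y(\varphi_Y(z),\varphi_Y(z'))|$ over the same tripods. *)

theory Defs
  imports Complex_Main "HOL-Library.Multiset" "HOL-Library.Extended_Real"
begin

text \<open>Intervals [a,b) with a real, b real or infinity, encoded as pairs (a, b) :: real \<times> ereal.\<close>
type_synonym interval = "real \<times> ereal"

definition filtration :: "'a set \<Rightarrow> ('a set \<Rightarrow> real) \<Rightarrow> bool" where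
  "filtration X F \<longleftrightarrow>
     (\<forall>\<sigma> \<tau>. \<sigma> \<noteq> {} \<and> \<sigma> \<subseteq> \<tau> \<and> \<tau> \<subseteq> X \<longrightarrow> F \<sigma> \<le> F \<tau>)"

text \<open>Death time: min over strict supersets within X, min of empty set is infinity.\<close>
definition death :: "'a set \<Rightarrow> ('a set \<Rightarrow> real) \<Rightarrow> 'a set \<Rightarrow> ereal" where
  "death X F \<sigma> = Inf ((\<lambda>\<tau>. ereal (F \<tau>)) ` {\<tau>. \<sigma> \<subset> \<tau> \<and> \<tau> \<subseteq> X})"

definition interval_of :: "'a set \<Rightarrow> ('a set \<Rightarrow> real) \<Rightarrow> 'a set \<Rightarrow> interval" where
  "interval_of X F \<sigma> = (F \<sigma>, death X F \<sigma>)"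

definition mgm :: "'a set \<Rightarrow> ('a set \<Rightarrow> real) \<Rightarrow> interval multiset" where
  "mgm X F = filter_mset (\<lambda>(a, b). ereal a < b)
      (image_mset (interval_of X F) (mset_set {\<sigma>. \<sigma> \<subseteq> X \<and> \<sigma> \<noteq> {}}))"

definition end_close :: "ereal \<Rightarrow> ereal \<Rightarrow> real \<Rightarrow> bool" where
  "end_close b b' \<epsilon> \<longleftrightarrow>
     (b = \<infinity> \<and> b' = \<infinity>) \<or>
     (\<exists>r r'. b = ereal r \<and> b' = ereal r' \<and> \<bar>r - r'\<bar> \<le> \<epsilon>)"

text \<open>A partial bijection between multisets A and B: a multiset M of matched pairs.\<close>
definition eps_matching :: "real \<Rightarrow> interval multiset \<Rightarrow> interval multiset \<Rightarrow> (interval \<times> interval) multiset \<Rightarrow> bool" where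
  "eps_matching \<epsilon> A B M \<longleftrightarrow>
     image_mset fst M \<subseteq># A \<and> image_mset snd M \<subseteq># B \<and>
     (\<forall>((a, b), (a', b')) \<in># M. \<bar>a - a'\<bar> \<le> \<epsilon> \<and> end_close b b' \<epsilon>) \<and>
     (\<forall>(a, b) \<in># A - image_mset fst M. b - ereal a \<le> ereal (2 * \<epsilon>)) \<and>
     (\<forall>(a, b) \<in># B - image_mset snd M. b - ereal a \<le> ereal (2 * \<epsilon>))"

definition bottleneck :: "interval multiset \<Rightarrow> interval multiset \<Rightarrow> ereal" where
  "bottleneck A B = Inf {ereal \<epsilon> | \<epsilon>. \<epsilon> \<ge> 0 \<and> (\<exists>M. eps_matching \<epsilon> A B M)}"

text \<open>Tripod distance; tripods Z are finite sets of naturals (every finite set is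
  in bijection with one), with surjections onto X and Y.\<close>
definition tripod_dist :: "'a set \<Rightarrow> ('a set \<Rightarrow> real) \<Rightarrow> 'b set \<Rightarrow> ('b set \<Rightarrow> real) \<Rightarrow> ereal" where
  "tripod_dist X FX Y FY = Inf {ereal (Max {\<bar>FX (\<phi>X ` \<kappa>) - FY (\<phi>Y ` \<kappa>)\<bar> | \<kappa>. \<kappa> \<subseteq> Z \<and> \<kappa> \<noteq> {}})
      | (Z :: nat set) \<phi>X \<phi>Y. finite Z \<and> \<phi>X ` Z = X \<and> \<phi>Y ` Z = Y}"

definition phylo_network :: "'a set \<Rightarrow> ('a \<Rightarrow> 'a \<Rightarrow> real) \<Rightarrow> bool" where
  "phylo_network X N \<longleftrightarrow>
     (\<forall>x\<in>X. \<forall>x'\<in>X. N x x' = N x' x \<and> max (N x x) (N x' x') \<le> N x x')"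

definition VR :: "('a \<Rightarrow> 'a \<Rightarrow> real) \<Rightarrow> 'a set \<Rightarrow> real" where
  "VR N \<sigma> = Max {N x x' | x x'. x \<in> \<sigma> \<and> x' \<in> \<sigma>}"

definition gh_dist :: "'a set \<Rightarrow> ('a \<Rightarrow> 'a \<Rightarrow> real) \<Rightarrow> 'b set \<Rightarrow> ('b \<Rightarrow> 'b \<Rightarrow> real) \<Rightarrow> ereal" where
  "gh_dist X NX Y NY = Inf {ereal (Max {\<bar>NX (\<phi>X z) (\<phi>X z') - NY (\<phi>Y z) (\<phi>Y z')\<bar> | z z'. z \<in> Z \<and> z' \<in> Z})
      | (Z :: nat set) \<phi>X \<phi>Y. finite Z \<and> \<phi>X ` Z = X \<and> \<phi>Y ` Z = Y}"

end

theory Submission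
  imports Defs
begin

lemma death_cases:
  assumes "finite Z"
  shows "(death Z G \<kappa> = \<infinity> \<and> {\<tau>. \<kappa> \<subset> \<tau> \<and> \<tau> \<subseteq> Z} = {}) \<or>
         (\<exists>t. \<kappa> \<subset> t \<and> t \<subseteq> Z \<and> death Z G \<kappa> = ereal (G t) \<and>
              (\<forall>\<tau>. \<kappa> \<subset> \<tau> \<and> \<tau> \<subseteq> Z \<longrightarrow> G t \<le> G \<tau>))"
proof (cases "{\<tau>. \<kappa> \<subset> \<tau> \<and> \<tau> \<subseteq> Z} = {}")
  case True
  have "death Z G \<kappa> = \<infinity>" unfolding death_def True by (simp add: top_ereal_def)
  then show ?thesis using True by blast
next
  case False
  define T where "T = {\<tau>. \<kappa> \<subset> \<tau> \<and> \<tau> \<subseteq> Z}"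
  have Tne: "T \<noteq> {}" using False unfolding T_def .
  have fT: "finite T"
    by (rule finite_subset[of T "Pow Z"]) (auto simp: T_def assms)
  have "Min (G ` T) \<in> G ` T" using fT Tne by (intro Min_in) simp_all
  then obtain t where t: "t \<in> T" "Min (G ` T) = G t" by (rule imageE) simp
  have tmin: "\<forall>\<tau>\<in>T. G t \<le> G \<tau>"
    using fT unfolding t(2)[symmetric] by (intro ballI Min_le) simp_all
  have "death Z G \<kappa> = ereal (G t)"
    unfolding death_def T_def[symmetric]
  proof (rule antisym)
    show "Inf ((\<lambda>\<tau>. ereal (G \<tau>)) ` T) \<le> ereal (G t)" using t(1) by (intro INF_lower)
    show "ereal (G t) \<le> Inf ((\<lambda>\<tau>. ereal (G \<tau>)) ` T)" using tmin by (intro INF_greatest) simp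
  qed
  then show ?thesis using t tmin unfolding T_def by blast
qed

lemma death_le:
  assumes "\<kappa> \<subset> \<tau>" "\<tau> \<subseteq> Z"
  shows "death Z G \<kappa> \<le> ereal (G \<tau>)"
  unfolding death_def using assms by (intro Inf_lower) auto

lemma mgm_alt:
  assumes "finite Z"
  shows "mgm Z G = image_mset (interval_of Z G)
           (mset_set {\<kappa>. \<kappa> \<subseteq> Z \<and> \<kappa> \<noteq> {} \<and> G \<kappa> < death Z G \<kappa>})"
proof -
  have f: "finite {\<sigma>. \<sigma> \<subseteq> Z \<and> \<sigma> \<noteq> {}}" using assms by simp
  have e: "{x \<in> {\<sigma>. \<sigma> \<subseteq> Z \<and> \<sigma> \<noteq> {}}. (\<lambda>(a, b). ereal a < b) (interval_of Z G x)}
     = {\<kappa>. \<kappa> \<subseteq> Z \<and> \<kappa> \<noteq> {} \<and> G \<kappa> < death Z G \<kappa>}"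
    unfolding interval_of_def by (simp add: conj_assoc)
  have "mgm Z G = image_mset (interval_of Z G) (filter_mset (\<lambda>x. (\<lambda>(a, b). ereal a < b) (interval_of Z G x))
      (mset_set {\<sigma>. \<sigma> \<subseteq> Z \<and> \<sigma> \<noteq> {}}))"
    unfolding mgm_def by (rule filter_mset_image_mset)
  also have "\<dots> = image_mset (interval_of Z G) (mset_set {x \<in> {\<sigma>. \<sigma> \<subseteq> Z \<and> \<sigma> \<noteq> {}}. (\<lambda>(a, b). ereal a < b) (interval_of Z G x)})"
    by (subst filter_mset_mset_set[OF f]) (rule refl)
  also have "\<dots> = image_mset (interval_of Z G)
           (mset_set {\<kappa>. \<kappa> \<subseteq> Z \<and> \<kappa> \<noteq> {} \<and> G \<kappa> < death Z G \<kappa>})"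
    by (subst e) (rule refl)
  finally show ?thesis .
qed


lemma match_pt:
  assumes Z: "finite Z" and k: "\<kappa> \<subseteq> Z" "\<kappa> \<noteq> {}"
    and H: "\<forall>\<kappa>. \<kappa> \<subseteq> Z \<and> \<kappa> \<noteq> {} \<longrightarrow> \<bar>G \<kappa> - H \<kappa>\<bar> \<le> \<epsilon>"
  shows "end_close (death Z G \<kappa>) (death Z H \<kappa>) \<epsilon>"
  using death_cases[OF Z, of G \<kappa>] death_cases[OF Z, of H \<kappa>]
proof (elim disjE conjE exE)
  fix t1 t2
  assume a: "\<kappa> \<subset> t1" "t1 \<subseteq> Z" "death Z G \<kappa> = ereal (G t1)"
     "\<forall>\<tau>. \<kappa> \<subset> \<tau> \<and> \<tau> \<subseteq> Z \<longrightarrow> G t1 \<le> G \<tau>"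
    and b: "\<kappa> \<subset> t2" "t2 \<subseteq> Z" "death Z H \<kappa> = ereal (H t2)"
     "\<forall>\<tau>. \<kappa> \<subset> \<tau> \<and> \<tau> \<subseteq> Z \<longrightarrow> H t2 \<le> H \<tau>"
  have n1: "t1 \<noteq> {}" "t2 \<noteq> {}" using a(1) b(1) k by auto
  have "G t1 \<le> G t2" using a(4) b(1,2) by blast
  moreover have "H t2 \<le> H t1" using b(4) a(1,2) by blast
  moreover have "\<bar>G t1 - H t1\<bar> \<le> \<epsilon>" "\<bar>G t2 - H t2\<bar> \<le> \<epsilon>" using H a(2) b(2) n1 by auto
  ultimately have "\<bar>G t1 - H t2\<bar> \<le> \<epsilon>" by linarith
  then show ?thesis unfolding end_close_def a(3) b(3) by blast
qed (auto simp: end_close_def)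

lemma unmatched_pt:
  assumes Z: "finite Z" and k: "\<kappa> \<subseteq> Z" "\<kappa> \<noteq> {}"
    and H: "\<forall>\<kappa>. \<kappa> \<subseteq> Z \<and> \<kappa> \<noteq> {} \<longrightarrow> \<bar>G \<kappa> - H \<kappa>\<bar> \<le> \<epsilon>"
    and g: "ereal (G \<kappa>) < death Z G \<kappa>" and h: "\<not> ereal (H \<kappa>) < death Z H \<kappa>"
  shows "death Z G \<kappa> - ereal (G \<kappa>) \<le> ereal (2 * \<epsilon>)"
  using death_cases[OF Z, of G \<kappa>] death_cases[OF Z, of H \<kappa>]
proof (elim disjE conjE exE)
  fix t1 t2
  assume a: "\<kappa> \<subset> t1" "t1 \<subseteq> Z" "death Z G \<kappa> = ereal (G t1)"
     "\<forall>\<tau>. \<kappa> \<subset> \<tau> \<and> \<tau> \<subseteq> Z \<longrightarrow> G t1 \<le> G \<tau>"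
    and b: "\<kappa> \<subset> t2" "t2 \<subseteq> Z" "death Z H \<kappa> = ereal (H t2)"
     "\<forall>\<tau>. \<kappa> \<subset> \<tau> \<and> \<tau> \<subseteq> Z \<longrightarrow> H t2 \<le> H \<tau>"
  have n1: "t2 \<noteq> {}" using b(1) k by auto
  have "G t1 \<le> G t2" using a(4) b(1,2) by blast
  moreover have "H t2 \<le> H \<kappa>" using h b(3) by simp
  moreover have "\<bar>G \<kappa> - H \<kappa>\<bar> \<le> \<epsilon>" "\<bar>G t2 - H t2\<bar> \<le> \<epsilon>" using H k b(2) n1 by auto
  ultimately have "G t1 - G \<kappa> \<le> 2 * \<epsilon>" by linarith
  then show ?thesis unfolding a(3) by simp
qed (use g h in auto)

lemma match_Z:
  assumes Z: "finite Z" and e: "\<epsilon> \<ge> 0"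
    and H: "\<forall>\<kappa>. \<kappa> \<subseteq> Z \<and> \<kappa> \<noteq> {} \<longrightarrow> \<bar>G \<kappa> - H \<kappa>\<bar> \<le> \<epsilon>"
  shows "\<exists>M. eps_matching \<epsilon> (mgm Z G) (mgm Z H) M"
proof -
  define A where "A = {\<kappa>. \<kappa> \<subseteq> Z \<and> \<kappa> \<noteq> {} \<and> ereal (G \<kappa>) < death Z G \<kappa>}"
  define B where "B = {\<kappa>. \<kappa> \<subseteq> Z \<and> \<kappa> \<noteq> {} \<and> ereal (H \<kappa>) < death Z H \<kappa>}"
  define C where "C = A \<inter> B"
  define M where "M = image_mset (\<lambda>\<kappa>. (interval_of Z G \<kappa>, interval_of Z H \<kappa>)) (mset_set C)"
  have fA: "finite A" unfolding A_def by (rule finite_subset[of _ "Pow Z"]) (auto simp: Z)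
  have fB: "finite B" unfolding B_def by (rule finite_subset[of _ "Pow Z"]) (auto simp: Z)
  have fC: "finite C" using fA unfolding C_def by simp
  have mA: "mgm Z G = image_mset (interval_of Z G) (mset_set A)" unfolding A_def by (rule mgm_alt[OF Z])
  have mB: "mgm Z H = image_mset (interval_of Z H) (mset_set B)" unfolding B_def by (rule mgm_alt[OF Z])
  have sA: "mset_set A = mset_set C + mset_set (A - C)"
  proof -
    have "A = C \<union> (A - C)" unfolding C_def by blast
    then have "mset_set A = mset_set (C \<union> (A - C))" by simp
    also have "\<dots> = mset_set C + mset_set (A - C)" using fA fC by (intro mset_set_Union) auto
    finally show ?thesis .
  qed
  have sB: "mset_set B = mset_set C + mset_set (B - C)"
  proof -
    have "B = C \<union> (B - C)" unfolding C_def by blast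
    then have "mset_set B = mset_set (C \<union> (B - C))" by simp
    also have "\<dots> = mset_set C + mset_set (B - C)" using fB fC by (intro mset_set_Union) auto
    finally show ?thesis .
  qed
  have f1: "image_mset fst M = image_mset (interval_of Z G) (mset_set C)"
    unfolding M_def by (simp add: multiset.map_comp o_def)
  have f2: "image_mset snd M = image_mset (interval_of Z H) (mset_set C)"
    unfolding M_def by (simp add: multiset.map_comp o_def)
  have dA: "mgm Z G - image_mset fst M = image_mset (interval_of Z G) (mset_set (A - C))"
    unfolding mA f1 sA by simp
  have dB: "mgm Z H - image_mset snd M = image_mset (interval_of Z H) (mset_set (B - C))"
    unfolding mB f2 sB by simp
  have "eps_matching \<epsilon> (mgm Z G) (mgm Z H) M"
    unfolding eps_matching_def
  proof (intro conjI)
    show "image_mset fst M \<subseteq># mgm Z G" unfolding mA f1 sA by simp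
    show "image_mset snd M \<subseteq># mgm Z H" unfolding mB f2 sB by simp
    have X: "\<bar>G \<kappa> - H \<kappa>\<bar> \<le> \<epsilon> \<and> end_close (death Z G \<kappa>) (death Z H \<kappa>) \<epsilon>" if k: "\<kappa> \<in> C" for \<kappa>
    proof -
      have k2: "\<kappa> \<subseteq> Z" "\<kappa> \<noteq> {}" using k(1) unfolding C_def A_def by auto
      have "\<bar>G \<kappa> - H \<kappa>\<bar> \<le> \<epsilon>" using H k2 by blast
      moreover have "end_close (death Z G \<kappa>) (death Z H \<kappa>) \<epsilon>" by (rule match_pt[OF Z k2 H])
      ultimately show ?thesis by simp
    qed
    show "\<forall>((a, b), (a', b')) \<in># M. \<bar>a - a'\<bar> \<le> \<epsilon> \<and> end_close b b' \<epsilon>"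
      unfolding M_def using X fC by (auto simp: interval_of_def)
    have Y: "death Z G \<kappa> - ereal (G \<kappa>) \<le> ereal (2 * \<epsilon>)" if k: "\<kappa> \<in> A - C" for \<kappa>
    proof -
      have k2: "\<kappa> \<subseteq> Z" "\<kappa> \<noteq> {}" "ereal (G \<kappa>) < death Z G \<kappa>" "\<not> ereal (H \<kappa>) < death Z H \<kappa>"
        using k(1) unfolding C_def A_def B_def by auto
      show ?thesis using unmatched_pt[OF Z k2(1,2) H k2(3,4)] .
    qed
    show "\<forall>(a, b) \<in># mgm Z G - image_mset fst M. b - ereal a \<le> ereal (2 * \<epsilon>)"
      unfolding dA using Y fA by (auto simp: interval_of_def)
    have H': "\<forall>\<kappa>. \<kappa> \<subseteq> Z \<and> \<kappa> \<noteq> {} \<longrightarrow> \<bar>H \<kappa> - G \<kappa>\<bar> \<le> \<epsilon>" using H by (simp add: abs_minus_commute)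
    have W: "death Z H \<kappa> - ereal (H \<kappa>) \<le> ereal (2 * \<epsilon>)" if k: "\<kappa> \<in> B - C" for \<kappa>
    proof -
      have k2: "\<kappa> \<subseteq> Z" "\<kappa> \<noteq> {}" "ereal (H \<kappa>) < death Z H \<kappa>" "\<not> ereal (G \<kappa>) < death Z G \<kappa>"
        using k(1) unfolding C_def A_def B_def by auto
      show ?thesis using unmatched_pt[OF Z k2(1,2) H' k2(3,4)] .
    qed
    show "\<forall>(a, b) \<in># mgm Z H - image_mset snd M. b - ereal a \<le> ereal (2 * \<epsilon>)"
      unfolding dB using W fB by (auto simp: interval_of_def)
  qed
  then show ?thesis by blast
qed


lemma mgm_pullback:
  assumes Z: "finite Z" and sur: "\<phi> ` Z = X"
  shows "mgm Z (\<lambda>\<kappa>. F (\<phi> ` \<kappa>)) = mgm X F"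
proof -
  define G where "G = (\<lambda>\<kappa>. F (\<phi> ` \<kappa>))"
  define pre where "pre = (\<lambda>\<sigma>. {z \<in> Z. \<phi> z \<in> \<sigma>})"
  have fX: "finite X" using Z sur by blast
  have c1: "\<phi> ` pre \<sigma> = \<sigma>" if "\<sigma> \<subseteq> X" for \<sigma>
    using that sur unfolding pre_def by blast
  have c3: "G (pre \<sigma>) = F \<sigma>" if "\<sigma> \<subseteq> X" for \<sigma>
    unfolding G_def using c1[OF that] by simp
  have c2: "death Z G (pre \<sigma>) = death X F \<sigma>" if s: "\<sigma> \<subseteq> X" for \<sigma>
  proof -
    have im: "image \<phi> ` {\<tau>. pre \<sigma> \<subset> \<tau> \<and> \<tau> \<subseteq> Z} = {\<tau>. \<sigma> \<subset> \<tau> \<and> \<tau> \<subseteq> X}"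
    proof (intro equalityI subsetI)
      fix y assume "y \<in> image \<phi> ` {\<tau>. pre \<sigma> \<subset> \<tau> \<and> \<tau> \<subseteq> Z}"
      then obtain \<tau> where t: "pre \<sigma> \<subset> \<tau>" "\<tau> \<subseteq> Z" "y = \<phi> ` \<tau>" by blast
      have "y \<subseteq> X" using t sur by blast
      moreover have "\<sigma> \<subseteq> y" using c1[OF s] t by blast
      moreover have "\<sigma> \<noteq> y"
      proof
        assume "\<sigma> = y"
        obtain z where "z \<in> \<tau>" "z \<notin> pre \<sigma>" using t(1) by blast
        then show False using t \<open>\<sigma> = y\<close> unfolding pre_def by blast
      qed
      ultimately show "y \<in> {\<tau>. \<sigma> \<subset> \<tau> \<and> \<tau> \<subseteq> X}" by blast
    next
      fix y assume "y \<in> {\<tau>. \<sigma> \<subset> \<tau> \<and> \<tau> \<subseteq> X}"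
      then have y: "\<sigma> \<subset> y" "y \<subseteq> X" by auto
      have "pre \<sigma> \<subset> pre y"
      proof -
        obtain x where x: "x \<in> y" "x \<notin> \<sigma>" using y by blast
        then obtain z where "z \<in> Z" "\<phi> z = x" using y sur by blast
        then show ?thesis using x y unfolding pre_def by blast
      qed
      moreover have "pre y \<subseteq> Z" unfolding pre_def by blast
      ultimately show "y \<in> image \<phi> ` {\<tau>. pre \<sigma> \<subset> \<tau> \<and> \<tau> \<subseteq> Z}"
        using c1[OF y(2)] by (intro image_eqI[of _ _ "pre y"]) auto
    qed
    have "(\<lambda>\<tau>. ereal (G \<tau>)) ` {\<tau>. pre \<sigma> \<subset> \<tau> \<and> \<tau> \<subseteq> Z}
        = (\<lambda>\<tau>. ereal (F \<tau>)) ` (image \<phi> ` {\<tau>. pre \<sigma> \<subset> \<tau> \<and> \<tau> \<subseteq> Z})"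
      unfolding G_def image_image ..
    then show ?thesis unfolding death_def im by simp
  qed
  have ci: "interval_of Z G (pre \<sigma>) = interval_of X F \<sigma>" if "\<sigma> \<subseteq> X" for \<sigma>
    unfolding interval_of_def using c2[OF that] c3[OF that] by simp
  define AX where "AX = {\<sigma>. \<sigma> \<subseteq> X \<and> \<sigma> \<noteq> {} \<and> ereal (F \<sigma>) < death X F \<sigma>}"
  define AZ where "AZ = {\<kappa>. \<kappa> \<subseteq> Z \<and> \<kappa> \<noteq> {} \<and> ereal (G \<kappa>) < death Z G \<kappa>}"
  have fAX: "finite AX" unfolding AX_def by (rule finite_subset[of _ "Pow X"]) (auto simp: fX)
  have c4: "AZ = pre ` AX"
  proof (intro equalityI subsetI)
    fix \<kappa> assume k: "\<kappa> \<in> AZ"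
    define \<sigma> where "\<sigma> = \<phi> ` \<kappa>"
    have sX: "\<sigma> \<subseteq> X" using k sur unfolding AZ_def \<sigma>_def by blast
    have sub: "\<kappa> \<subseteq> pre \<sigma>" using k unfolding AZ_def \<sigma>_def pre_def by blast
    have eq: "\<kappa> = pre \<sigma>"
    proof (rule ccontr)
      assume "\<kappa> \<noteq> pre \<sigma>"
      then have "\<kappa> \<subset> pre \<sigma>" using sub by blast
      then have "death Z G \<kappa> \<le> ereal (G (pre \<sigma>))" by (intro death_le) (auto simp: pre_def)
      also have "G (pre \<sigma>) = G \<kappa>" using c3[OF sX] unfolding G_def \<sigma>_def by simp
      finally show False using k unfolding AZ_def by (simp add: not_le[symmetric])
    qed
    have "\<sigma> \<in> AX" using k eq c2[OF sX] c3[OF sX] sX unfolding AX_def AZ_def \<sigma>_def by auto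
    then show "\<kappa> \<in> pre ` AX" using eq by blast
  next
    fix \<kappa> assume "\<kappa> \<in> pre ` AX"
    then obtain \<sigma> where s: "\<sigma> \<in> AX" "\<kappa> = pre \<sigma>" by blast
    have sX: "\<sigma> \<subseteq> X" using s unfolding AX_def by blast
    have "pre \<sigma> \<noteq> {}" using c1[OF sX] s(1) unfolding AX_def by auto
    then show "\<kappa> \<in> AZ" using s c2[OF sX] c3[OF sX] unfolding AX_def AZ_def pre_def by auto
  qed
  have inj: "inj_on pre AX"
    by (rule inj_on_inverseI[of _ "image \<phi>"]) (use c1 in \<open>auto simp: AX_def\<close>)
  have "mgm Z G = image_mset (interval_of Z G) (mset_set AZ)" unfolding AZ_def by (rule mgm_alt[OF Z])
  also have "\<dots> = image_mset (interval_of Z G) (image_mset pre (mset_set AX))"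
    unfolding c4 image_mset_mset_set[OF inj] ..
  also have "\<dots> = image_mset (\<lambda>\<sigma>. interval_of Z G (pre \<sigma>)) (mset_set AX)"
    by (simp add: multiset.map_comp o_def)
  also have "\<dots> = image_mset (interval_of X F) (mset_set AX)"
    by (rule image_mset_cong) (use ci fAX in \<open>auto simp: AX_def\<close>)
  also have "\<dots> = mgm X F" unfolding AX_def by (rule mgm_alt[OF fX, symmetric])
  finally show ?thesis unfolding G_def .
qed


lemma tripod_bound:
  assumes Z: "finite Z" and sx: "\<phi> ` Z = X" and sy: "\<psi> ` Z = Y" and e: "\<epsilon> \<ge> 0"
    and H: "\<forall>\<kappa>. \<kappa> \<subseteq> Z \<and> \<kappa> \<noteq> {} \<longrightarrow> \<bar>FX (\<phi> ` \<kappa>) - FY (\<psi> ` \<kappa>)\<bar> \<le> \<epsilon>"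
  shows "bottleneck (mgm X FX) (mgm Y FY) \<le> ereal \<epsilon>"
proof -
  obtain M where M: "eps_matching \<epsilon> (mgm Z (\<lambda>\<kappa>. FX (\<phi> ` \<kappa>))) (mgm Z (\<lambda>\<kappa>. FY (\<psi> ` \<kappa>))) M"
    using match_Z[OF Z e, of "\<lambda>\<kappa>. FX (\<phi> ` \<kappa>)" "\<lambda>\<kappa>. FY (\<psi> ` \<kappa>)"] H by blast
  then have "eps_matching \<epsilon> (mgm X FX) (mgm Y FY) M"
    unfolding mgm_pullback[OF Z sx] mgm_pullback[OF Z sy] .
  then show ?thesis unfolding bottleneck_def using e by (intro Inf_lower) blast
qed

lemma VR_max:
  assumes "finite \<sigma>" "\<sigma> \<noteq> {}"
  shows "(\<exists>x\<in>\<sigma>. \<exists>x'\<in>\<sigma>. VR N \<sigma> = N x x') \<and> (\<forall>x\<in>\<sigma>. \<forall>x'\<in>\<sigma>. N x x' \<le> VR N \<sigma>)"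
proof -
  have eq: "{N x x' | x x'. x \<in> \<sigma> \<and> x' \<in> \<sigma>} = (\<lambda>(x, x'). N x x') ` (\<sigma> \<times> \<sigma>)" by auto
  have f: "finite ((\<lambda>(x, x'). N x x') ` (\<sigma> \<times> \<sigma>))" using assms by simp
  have ne: "(\<lambda>(x, x'). N x x') ` (\<sigma> \<times> \<sigma>) \<noteq> {}" using assms by simp
  have "VR N \<sigma> \<in> (\<lambda>(x, x'). N x x') ` (\<sigma> \<times> \<sigma>)" unfolding VR_def eq using f ne by (rule Max_in)
  moreover have "\<forall>x\<in>\<sigma>. \<forall>x'\<in>\<sigma>. N x x' \<le> VR N \<sigma>" unfolding VR_def eq using f by (auto intro!: Max_ge)
  ultimately show ?thesis by auto
qed

theorem mainTheorem16:
  fixes X :: "'a set" and Y :: "'b set"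
  assumes "finite X" "finite Y" "X \<noteq> {}" "Y \<noteq> {}"
  shows "(\<forall>FX FY. filtration X FX \<and> filtration Y FY \<longrightarrow>
            bottleneck (mgm X FX) (mgm Y FY) \<le> tripod_dist X FX Y FY)
       \<and> (\<forall>NX NY. phylo_network X NX \<and> phylo_network Y NY \<longrightarrow>
            bottleneck (mgm X (VR NX)) (mgm Y (VR NY)) \<le> gh_dist X NX Y NY)"
proof (intro conjI allI impI)
  fix FX FY
  show "bottleneck (mgm X FX) (mgm Y FY) \<le> tripod_dist X FX Y FY"
    unfolding tripod_dist_def
  proof (rule Inf_greatest)
    fix e assume "e \<in> {ereal (Max {\<bar>FX (\<phi>X ` \<kappa>) - FY (\<phi>Y ` \<kappa>)\<bar> | \<kappa>. \<kappa> \<subseteq> Z \<and> \<kappa> \<noteq> {}})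
      | (Z :: nat set) \<phi>X \<phi>Y. finite Z \<and> \<phi>X ` Z = X \<and> \<phi>Y ` Z = Y}"
    then obtain Z :: "nat set" and \<phi>X \<phi>Y where Z: "finite Z" "\<phi>X ` Z = X" "\<phi>Y ` Z = Y"
      and e: "e = ereal (Max {\<bar>FX (\<phi>X ` \<kappa>) - FY (\<phi>Y ` \<kappa>)\<bar> | \<kappa>. \<kappa> \<subseteq> Z \<and> \<kappa> \<noteq> {}})"
      by blast
    define D where "D = {\<bar>FX (\<phi>X ` \<kappa>) - FY (\<phi>Y ` \<kappa>)\<bar> | \<kappa>. \<kappa> \<subseteq> Z \<and> \<kappa> \<noteq> {}}"
    have Deq: "D = (\<lambda>\<kappa>. \<bar>FX (\<phi>X ` \<kappa>) - FY (\<phi>Y ` \<kappa>)\<bar>) ` {\<kappa>. \<kappa> \<subseteq> Z \<and> \<kappa> \<noteq> {}}"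
      unfolding D_def by auto
    have fD: "finite D" unfolding Deq using Z(1) by simp
    have Zne: "Z \<noteq> {}" using Z(2) assms(3) by blast
    have le: "\<forall>\<kappa>. \<kappa> \<subseteq> Z \<and> \<kappa> \<noteq> {} \<longrightarrow> \<bar>FX (\<phi>X ` \<kappa>) - FY (\<phi>Y ` \<kappa>)\<bar> \<le> Max D"
      using fD unfolding D_def by (auto intro!: Max_ge)
    have "0 \<le> Max D" using le Zne by (meson abs_ge_zero order_trans order_refl)
    then show "bottleneck (mgm X FX) (mgm Y FY) \<le> e"
      unfolding e D_def[symmetric] by (rule tripod_bound[OF Z _ le])
  qed
next
  fix NX NY
  show "bottleneck (mgm X (VR NX)) (mgm Y (VR NY)) \<le> gh_dist X NX Y NY"
    unfolding gh_dist_def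
  proof (rule Inf_greatest)
    fix e assume "e \<in> {ereal (Max {\<bar>NX (\<phi>X z) (\<phi>X z') - NY (\<phi>Y z) (\<phi>Y z')\<bar> | z z'. z \<in> Z \<and> z' \<in> Z})
      | (Z :: nat set) \<phi>X \<phi>Y. finite Z \<and> \<phi>X ` Z = X \<and> \<phi>Y ` Z = Y}"
    then obtain Z :: "nat set" and \<phi>X \<phi>Y where Z: "finite Z" "\<phi>X ` Z = X" "\<phi>Y ` Z = Y"
      and e: "e = ereal (Max {\<bar>NX (\<phi>X z) (\<phi>X z') - NY (\<phi>Y z) (\<phi>Y z')\<bar> | z z'. z \<in> Z \<and> z' \<in> Z})"
      by blast
    define D where "D = {\<bar>NX (\<phi>X z) (\<phi>X z') - NY (\<phi>Y z) (\<phi>Y z')\<bar> | z z'. z \<in> Z \<and> z' \<in> Z}"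
    have Deq: "D = (\<lambda>(z, z'). \<bar>NX (\<phi>X z) (\<phi>X z') - NY (\<phi>Y z) (\<phi>Y z')\<bar>) ` (Z \<times> Z)"
      unfolding D_def by auto
    have fD: "finite D" unfolding Deq using Z(1) by simp
    have Zne: "Z \<noteq> {}" using Z(2) assms(3) by blast
    have le0: "\<forall>z\<in>Z. \<forall>z'\<in>Z. \<bar>NX (\<phi>X z) (\<phi>X z') - NY (\<phi>Y z) (\<phi>Y z')\<bar> \<le> Max D"
      using fD unfolding D_def by (auto intro!: Max_ge)
    have le: "\<forall>\<kappa>. \<kappa> \<subseteq> Z \<and> \<kappa> \<noteq> {} \<longrightarrow> \<bar>VR NX (\<phi>X ` \<kappa>) - VR NY (\<phi>Y ` \<kappa>)\<bar> \<le> Max D"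
    proof (intro allI impI)
      fix \<kappa> assume k: "\<kappa> \<subseteq> Z \<and> \<kappa> \<noteq> {}"
      have fk: "finite \<kappa>" using k Z(1) finite_subset by blast
      have fx: "finite (\<phi>X ` \<kappa>)" "\<phi>X ` \<kappa> \<noteq> {}" using fk k by auto
      have fy: "finite (\<phi>Y ` \<kappa>)" "\<phi>Y ` \<kappa> \<noteq> {}" using fk k by auto
      obtain z1 z1' where a: "z1 \<in> \<kappa>" "z1' \<in> \<kappa>" "VR NX (\<phi>X ` \<kappa>) = NX (\<phi>X z1) (\<phi>X z1')"
        using VR_max[OF fx, of NX] by blast
      obtain z2 z2' where b: "z2 \<in> \<kappa>" "z2' \<in> \<kappa>" "VR NY (\<phi>Y ` \<kappa>) = NY (\<phi>Y z2) (\<phi>Y z2')"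
        using VR_max[OF fy, of NY] by blast
      have "NY (\<phi>Y z1) (\<phi>Y z1') \<le> VR NY (\<phi>Y ` \<kappa>)" using VR_max[OF fy, of NY] a by blast
      moreover have "NX (\<phi>X z2) (\<phi>X z2') \<le> VR NX (\<phi>X ` \<kappa>)" using VR_max[OF fx, of NX] b by blast
      moreover have "\<bar>NX (\<phi>X z1) (\<phi>X z1') - NY (\<phi>Y z1) (\<phi>Y z1')\<bar> \<le> Max D" using le0 a k by blast
      moreover have "\<bar>NX (\<phi>X z2) (\<phi>X z2') - NY (\<phi>Y z2) (\<phi>Y z2')\<bar> \<le> Max D" using le0 b k by blast
      ultimately show "\<bar>VR NX (\<phi>X ` \<kappa>) - VR NY (\<phi>Y ` \<kappa>)\<bar> \<le> Max D" using a(3) b(3) by linarith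
    qed
    obtain z where "z \<in> Z" using Zne by blast
    then have "0 \<le> Max D" using le0 by (meson abs_ge_zero order_trans)
    then show "bottleneck (mgm X (VR NX)) (mgm Y (VR NY)) \<le> e"
      unfolding e D_def[symmetric] by (rule tripod_bound[OF Z _ le])
  qed
qed

end
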